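(* Let $p$ be an odd prime and let $q\in\mathbb C_p$ with $|1-q|_p<p^{-1/(p-1)}$. For every $n\in\mathbb Z_+=\{0,1,2,\dots\}$, $$E_{n,q}=\sum_{k=0}^n\sum_{m=0}^k\sum_{l=m}^k q^{\binom k2}s_{2,q}(n,k)\,(q-1)^{m-k}\binom kl_q q^{\binom l2+l(1-k)}\binom lm(-1)^{l+k}E_{m,q}.$$
   Context: $\mathbb Z_p,\mathbb C_p$ denote the $p$-adic integers and the completion of an algebraic closure of $\mathbb Q_p$; $|\cdot|_p$ is normalized by $|p|_p=p^{-1}$. For $x\in\mathbb Z_p$, $[x]_q=\frac{1-q^x}{1-q}$. The fermionic $p$-adic integral of a uniformly differentiable $f:\mathbb Z_p\to\mathbb C_p$ is $\int_{\mathbb Z_p}f(x)\,d\mu_{-1}(x)=\lim_{N\to\infty}\sum_{x=0}^{p^N-1}f(x)(-1)^x$. The $q$-Euler numbers are $E_{n,q}=\int_{\mathbb Z_p}[x]_q^n\,d\mu_{-1}(x)$ (equivalently $E_{n,q}=\frac{2}{(1-q)^n}\sum_{l=0}^n\binom nl(-1)^l\frac{1}{1+q^l}$). $[n]_q!=[n]_q[n-1]_q\cdots[1]_q$ ($[0]_q!=1$) and $\binom kl_q=\frac{[k]_q!}{[l]_q![k-l]_q!}$; $\binom lm$ is the ordinary binomial coefficient. The $q$-Stirling numbers of the second kind $s_{2,q}(n,k)$ are the coefficients in the identity $[x]_q^n=\sum_{k=0}^n q^{\binom k2}s_{2,q}(n,k)\,[x]_q[x-1]_q\cdots[x-k+1]_q$,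 viewed as an identity of polynomials in $[x]_q$ (using $[x-i]_q=q^{-i}([x]_q-[i]_q)$). *)

theory Defs
  imports Complex_Main "HOL-Computational_Algebra.Polynomial"
begin

text \<open>Abstract model of C_p: a field of characteristic 0 with a non-archimedean
absolute value N normalised by N p = 1/p, complete and algebraically closed.
C_p is such a field; the theorem is stated for every such field.\<close>

definition Cp_like :: "nat \<Rightarrow> ('a::field_char_0 \<Rightarrow> real) \<Rightarrow> bool" where
  "Cp_like p N \<longleftrightarrow>
     (\<forall>x. 0 \<le> N x) \<and> (\<forall>x. N x = 0 \<longleftrightarrow> x = 0) \<and>
     (\<forall>x y. N (x * y) = N x * N y) \<and> (\<forall>x y. N (x + y) \<le> max (N x) (N y)) \<and>
     N (of_nat p) = 1 / real p \<and>
     (\<forall>X::nat \<Rightarrow> 'a. (\<forall>e>0. \<exists>M. \<forall>m\<ge>M. \<forall>n\<ge>M. N (X m - X n) < e) \<longrightarrow>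
        (\<exists>L. \<forall>e>0. \<exists>M. \<forall>n\<ge>M. N (X n - L) < e)) \<and>
     (\<forall>P::'a poly. 0 < degree P \<longrightarrow> (\<exists>z. poly P z = 0))"

definition qint :: "'a::field \<Rightarrow> nat \<Rightarrow> 'a" where
  "qint q x = (1 - q ^ x) / (1 - q)"

definition qfact :: "'a::field \<Rightarrow> nat \<Rightarrow> 'a" where
  "qfact q n = (\<Prod>i=1..n. qint q i)"

definition qbinom :: "'a::field \<Rightarrow> nat \<Rightarrow> nat \<Rightarrow> 'a" where
  "qbinom q k l = qfact q k / (qfact q l * qfact q (k - l))"

definition qEuler :: "'a::field \<Rightarrow> nat \<Rightarrow> 'a" where
  "qEuler q n = 2 / (1 - q) ^ n *
     (\<Sum>l\<le>n. of_nat (n choose l) * (-1) ^ l * (1 / (1 + q ^ l)))"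

text \<open>q-Stirling numbers of the second kind: the coefficients in
  y^n = sum_{k<=n} q^(k choose 2) s(n,k) prod_{i<k} q^(-i) (y - [i]_q)
  as polynomials in y = [x]_q.\<close>
definition qStirling2 :: "'a::field \<Rightarrow> nat \<Rightarrow> nat \<Rightarrow> 'a" where
  "qStirling2 q n = (THE c. (\<forall>k>n. c k = 0) \<and>
      monom 1 n = (\<Sum>k\<le>n. smult (q ^ (k choose 2) * c k)
                     (\<Prod>i<k. smult (inverse q ^ i) [:- qint q i, 1:])))"

end

theory Submission
  imports Defs "HOL-Computational_Algebra.Primes"
begin


lemma Nbasic:
  assumes "Cp_like p N"
  shows "\<And>x. 0 \<le> N x" "\<And>x. N x = 0 \<longleftrightarrow> x = 0" "\<And>x y. N (x*y) = N x * N y"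
    "\<And>x y. N (x+y) \<le> max (N x) (N y)" "N (of_nat p) = 1 / real p"
  using assms unfolding Cp_like_def by auto

lemma N1: assumes "Cp_like p N" shows "N 1 = 1"
proof -
  have "N 1 = N 1 * N 1" using Nbasic(3)[OF assms, of 1 1] by simp
  moreover have "N 1 \<noteq> 0" using Nbasic(2)[OF assms, of 1] by simp
  ultimately show ?thesis by (metis mult_cancel_left1)
qed

lemma Nneg: assumes "Cp_like p N" shows "N (- x) = N x"
proof -
  have "N (-1) * N (-1) = 1" using Nbasic(3)[OF assms, of "-1" "-1"] N1[OF assms] by simp
  hence "(N (-1) - 1) * (N (-1) + 1) = 0" by (simp add: algebra_simps)
  moreover have "N (-1) + 1 > 0" using Nbasic(1)[OF assms, of "-1"] by simp
  ultimately have "N (-1) = 1" by simp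
  thus ?thesis using Nbasic(3)[OF assms, of "-1" x] by simp
qed

lemma Ndiff: assumes "Cp_like p N" shows "N (x - y) \<le> max (N x) (N y)"
  using Nbasic(4)[OF assms, of x "-y"] Nneg[OF assms, of y] by simp

lemma N0: assumes "Cp_like p N" shows "N 0 = 0"
  using Nbasic(2)[OF assms] by simp

lemma Nnat: assumes "Cp_like p N" shows "N (of_nat m) \<le> 1"
proof (induction m)
  case 0 thus ?case using N0[OF assms] by simp
next
  case (Suc m)
  have "N (of_nat (Suc m)) \<le> max (N (of_nat m)) (N 1)"
    using Nbasic(4)[OF assms, of "of_nat m" 1] by (simp add: add.commute)
  thus ?case using Suc N1[OF assms] by simp
qed

lemma Nsum_le: assumes "Cp_like p N" "0 \<le> B" "\<And>i. i \<in> A \<Longrightarrow> N (f i) \<le> B"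
  shows "N (sum f A) \<le> B"
  using assms(3)
proof (induction A rule: infinite_finite_induct)
  case (infinite A) thus ?case using N0[OF assms(1)] assms(2) by simp
next
  case empty thus ?case using N0[OF assms(1)] assms(2) by simp
next
  case (insert x F)
  have "N (sum f (insert x F)) \<le> max (N (f x)) (N (sum f F))"
    using insert(1,2) Nbasic(4)[OF assms(1)] by simp
  moreover have "N (f x) \<le> B" using insert.prems by simp
  moreover have "N (sum f F) \<le> B" using insert.IH insert.prems by simp
  ultimately show ?case by (simp add: max_def split: if_splits)
qed

lemma Nsum_less: assumes "Cp_like p N" "0 < B" "\<And>i. i \<in> A \<Longrightarrow> N (f i) < B"
  shows "N (sum f A) < B"
  using assms(3)
proof (induction A rule: infinite_finite_induct)
  case (infinite A) thus ?case using N0[OF assms(1)] assms(2) by simp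
next
  case empty thus ?case using N0[OF assms(1)] assms(2) by simp
next
  case (insert x F)
  have "N (sum f (insert x F)) \<le> max (N (f x)) (N (sum f F))"
    using insert(1,2) Nbasic(4)[OF assms(1)] by simp
  moreover have "N (f x) < B" using insert.prems by simp
  moreover have "N (sum f F) < B" using insert.IH insert.prems by simp
  ultimately show ?case by (simp add: max_def split: if_splits)
qed

lemma Ncoprime: assumes "Cp_like p N" "prime p" "\<not> p dvd e"
  shows "N (of_nat e) = 1"
proof -
  have e0: "e \<noteq> 0" using assms(3) by (metis dvd_0_right)
  have "coprime e p" using assms(2,3) using prime_imp_coprime coprime_commute by blast
  then obtain x y where xy: "e * x = p * y + 1" using bezout_nat[OF e0, of p] by auto
  have p1: "real p > 1" using assms(2) prime_gt_1_nat by auto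
  have "(1::'a) = of_nat e * of_nat x - of_nat p * of_nat y"
    using arg_cong[OF xy, of "of_nat :: nat \<Rightarrow> 'a"] by simp
  hence "N 1 \<le> max (N (of_nat e * of_nat x)) (N (of_nat p * of_nat y))"
    using Ndiff[OF assms(1)] by metis
  also have "N (of_nat e * of_nat x) \<le> N (of_nat e)"
    using Nbasic(3)[OF assms(1)] Nnat[OF assms(1), of x] Nbasic(1)[OF assms(1)]
    by (metis mult_left_le)
  also have "N (of_nat p * (of_nat y::'a)) \<le> 1 / real p"
    using Nbasic(3,5)[OF assms(1)] Nnat[OF assms(1), of y] p1
    by (simp add: divide_le_eq)
  finally have "1 \<le> max (N (of_nat e :: 'a)) (1 / real p)" using N1[OF assms(1)] by simp
  moreover have "1 / real p < 1" using p1 by simp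
  ultimately have "1 \<le> N (of_nat e :: 'a)" by linarith
  thus ?thesis using Nnat[OF assms(1), of e] by simp
qed

lemma Npower: assumes "Cp_like p N" shows "N (x ^ j) = N x ^ j"
  by (induction j) (simp_all add: N1[OF assms] Nbasic(3)[OF assms])

lemma Nle1: assumes "Cp_like p N" "N (1 - x) < 1" shows "N x \<le> 1"
proof -
  have "N x \<le> max (N 1) (N (1 - x))" using Ndiff[OF assms(1), of 1 "1 - x"] by simp
  thus ?thesis using assms(2) N1[OF assms(1)] by simp
qed

lemma Npow1: assumes "Cp_like p N" "N x \<le> 1" shows "N (1 - x ^ j) \<le> N (1 - x)"
proof -
  have e: "1 - x ^ j = (1 - x) * (\<Sum>i<j. x ^ i)"
    using power_diff_1_eq[of x j] by (simp add: algebra_simps)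
  have "N (\<Sum>i<j. x ^ i) \<le> 1"
    by (rule Nsum_le[OF assms(1)]) (simp_all add: Npower[OF assms(1)] assms(2) power_le_one Nbasic(1)[OF assms(1)])
  thus ?thesis unfolding e Nbasic(3)[OF assms(1)]
    by (simp add: Nbasic(1)[OF assms(1)] mult_left_le)
qed

lemma rootA: assumes "Cp_like p N" "prime p" "\<not> p dvd e" "w ^ e = 1" "N (1 - w) < 1"
  shows "w = 1"
proof (rule ccontr)
  assume wne: "w \<noteq> 1"
  have e0: "e \<noteq> 0" using assms(3) by (metis dvd_0_right)
  have "(w - 1) * (\<Sum>i<e. w ^ i) = 0" using power_diff_1_eq[of w e] assms(4) by simp
  hence S: "(\<Sum>i<e. w ^ i) = 0" using wne by simp
  have "(\<Sum>i<e. w ^ i - 1) = - of_nat e"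
    by (simp add: sum_subtractf S)
  moreover have "N (\<Sum>i<e. w ^ i - 1) < 1"
  proof (rule Nsum_less[OF assms(1)])
    fix i
    have "N (w ^ i - 1) = N (1 - w ^ i)" using Nneg[OF assms(1), of "1 - w ^ i"] by simp
    also have "\<dots> \<le> N (1 - w)" using Npow1[OF assms(1) Nle1[OF assms(1,5)]] .
    finally show "N (w ^ i - 1) < 1" using assms(5) by simp
  qed simp
  ultimately have "N (of_nat e :: 'a) < 1" using Nneg[OF assms(1)] by metis
  thus False using Ncoprime[OF assms(1,2,3)] by simp
qed

lemma rootB: assumes "Cp_like p N" "prime p" "w ^ p = 1" "w \<noteq> 1"
  shows "1 / real p \<le> N (1 - w) ^ (p - 1)"
proof (rule ccontr)
  define u where "u = 1 - w"
  assume "\<not> ?thesis"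
  hence small: "N u ^ (p - 1) < 1 / real p" unfolding u_def by simp
  have p2: "p \<ge> 2" using assms(2) prime_ge_2_nat by auto
  have u0: "u \<noteq> 0" using assms(4) unfolding u_def by simp
  have Nu0: "N u > 0" using u0 Nbasic(1,2)[OF assms(1), of u] by force
  have Nu1: "N u < 1"
  proof (rule ccontr)
    assume "\<not> N u < 1"
    hence "1 \<le> N u ^ (p - 1)" by (simp add: one_le_power)
    moreover have "1 / real p < 1" using p2 by simp
    ultimately show False using small by simp
  qed
  define g where "g k = of_nat (p choose k) * (-u) ^ k * 1 ^ (p - k)" for k
  have "w = -u + 1" unfolding u_def by simp
  hence "1 = (\<Sum>k\<le>p. g k)"
    using assms(3) binomial_ring[of "-u" 1 p] unfolding g_def by simp
  also have "{..p} = insert 0 (insert 1 {2..p})" using p2 by auto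
  also have "(\<Sum>k\<in>insert 0 (insert 1 {2..p}). g k) = g 0 + (g 1 + sum g {2..p})"
  proof -
    have a: "0 \<notin> insert 1 {2..p}" "1 \<notin> {2..p}" by auto
    have b: "finite (insert 1 {2..p})" "finite {2..p}" by auto
    show ?thesis by (simp only: sum.insert[OF b(1) a(1)] sum.insert[OF b(2) a(2)])
  qed
  also have "g 0 = 1" unfolding g_def by simp
  also have "g 1 = - (of_nat p * u)" unfolding g_def by simp
  also have "sum g {2..p} = (\<Sum>k=2..p. of_nat (p choose k) * (-u) ^ k)"
    unfolding g_def by simp
  finally have "1 = 1 + (- (of_nat p * u) + (\<Sum>k=2..p. of_nat (p choose k) * (-u) ^ k))" .
  hence eq: "of_nat p * u = (\<Sum>k=2..p. of_nat (p choose k) * (-u) ^ k)" by simp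
  have "N (\<Sum>k=2..p. of_nat (p choose k) * (-u) ^ k) < N u / real p"
  proof (rule Nsum_less[OF assms(1)])
    show "0 < N u / real p" using Nu0 p2 by simp
    fix k assume k: "k \<in> {2..p}"
    have Nk: "N ((-u) ^ k) = N u ^ k" using Npower[OF assms(1)] Nneg[OF assms(1)] by simp
    show "N (of_nat (p choose k) * (-u) ^ k) < N u / real p"
    proof (cases "k = p")
      case True
      obtain m where pm: "p = Suc m" using p2 by (cases p) auto
      have "N u ^ p = N u * N u ^ (p - 1)" unfolding pm by simp
      also have "\<dots> < N u * (1 / real p)" using mult_strict_left_mono[OF small Nu0] by simp
      finally show ?thesis using True Nk Nbasic(3)[OF assms(1)] N1[OF assms(1)] by simp
    next
      case False
      hence "p dvd (p choose k)" using k dvd_choose_prime[OF _ _ _ assms(2), of k] by auto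
      then obtain m where m: "p choose k = p * m" by auto
      have "N (of_nat (p choose k) :: 'a) \<le> 1 / real p"
        unfolding m using Nbasic(3,5)[OF assms(1)] Nnat[OF assms(1), of m] p2
        by (simp add: divide_le_eq)
      moreover have "N u ^ k \<le> N u ^ 2" using k Nu1 Nu0 by (simp add: power_decreasing)
      moreover have "N u ^ 2 < N u" using Nu1 Nu0 by (simp add: power2_eq_square)
      ultimately have "N (of_nat (p choose k) :: 'a) * N u ^ k < 1 / real p * N u"
      proof -
        have c0: "0 \<le> N u ^ k" using Nu0 by simp
        have "N (of_nat (p choose k) :: 'a) * N u ^ k \<le> 1 / real p * N u ^ k"
          using mult_right_mono[OF _ c0] \<open>N (of_nat (p choose k) :: 'a) \<le> 1 / real p\<close> by blast
        also have "\<dots> \<le> 1 / real p * N u ^ 2"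
          using mult_left_mono[OF \<open>N u ^ k \<le> N u ^ 2\<close>, of "1 / real p"] by simp
        also have "\<dots> < 1 / real p * N u"
          using mult_strict_left_mono[OF \<open>N u ^ 2 < N u\<close>, of "1 / real p"] p2 by simp
        finally show ?thesis .
      qed
      thus ?thesis using Nk Nbasic(3)[OF assms(1)] by simp
    qed
  qed
  moreover have "N (of_nat p * u) = N u / real p" using Nbasic(3,5)[OF assms(1)] by simp
  ultimately show False using eq by simp
qed

lemma noroot:
  assumes "Cp_like p N" "prime p" "N (1 - q) < r" "r ^ (p - 1) = 1 / real p" "r \<le> 1" "0 < r"
  shows "0 < i \<Longrightarrow> q ^ i = 1 \<Longrightarrow> q = 1"
proof (induction i rule: less_induct)
  case (less i)
  have Nq: "N q \<le> 1" using Nle1[OF assms(1)] assms(3,5) by simp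
  show ?case
  proof (cases "p dvd i")
    case False thus ?thesis using rootA[OF assms(1,2) False less(3)] assms(3,5) by simp
  next
    case True
    then obtain j where j: "i = p * j" by auto
    have p2: "p \<ge> 2" using assms(2) prime_ge_2_nat by auto
    have j0: "0 < j" "j < i" using j less(2) p2 by auto
    have w: "(q ^ j) ^ p = 1" using less(3) j by (simp add: power_mult[symmetric] mult.commute)
    have Nw: "N (1 - q ^ j) < r" using Npow1[OF assms(1) Nq, of j] assms(3) by simp
    have "q ^ j = 1"
    proof (rule ccontr)
      assume "q ^ j \<noteq> 1"
      from rootB[OF assms(1,2) w this] have "1 / real p \<le> N (1 - q ^ j) ^ (p - 1)" .
      moreover have "N (1 - q ^ j) ^ (p - 1) < r ^ (p - 1)"
        using Nw p2 Nbasic(1)[OF assms(1)] by (intro power_strict_mono) auto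
      ultimately show False using assms(4) by simp
    qed
    thus ?thesis using less(1)[OF j0(2,1)] by simp
  qed
qed


lemma basis_exists:
  fixes B :: "nat \<Rightarrow> 'a::field poly"
  assumes deg: "\<And>k. degree (B k) = k" and nz: "\<And>k. B k \<noteq> 0"
  shows "degree f \<le> n \<Longrightarrow> \<exists>d. f = (\<Sum>k\<le>n. smult (d k) (B k))"
proof (induction n arbitrary: f)
  case 0
  then obtain a where fa: "f = [:a:]" using degree_eq_zeroE by blast
  from deg[of 0] obtain c where bc: "B 0 = [:c:]" using degree_eq_zeroE by blast
  have "c \<noteq> 0" using nz[of 0] bc by auto
  hence "f = (\<Sum>k\<le>0. smult ((\<lambda>k. a / c) k) (B k))" using fa bc by simp
  thus ?case by (intro exI[where x="\<lambda>k. a / c"])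
next
  case (Suc n)
  define lc where "lc = lead_coeff (B (Suc n))"
  have lc0: "lc \<noteq> 0" using nz unfolding lc_def by simp
  define g where "g = f - smult (coeff f (Suc n) / lc) (B (Suc n))"
  have "degree g \<le> n"
  proof (rule degree_le, intro allI impI)
    fix i assume i: "n < i"
    show "coeff g i = 0"
    proof (cases "i = Suc n")
      case True thus ?thesis unfolding g_def lc_def using lc0 deg[of "Suc n"] lc_def by simp
    next
      case False
      hence "i > Suc n" using i by simp
      hence "coeff f i = 0" "coeff (B (Suc n)) i = 0" using Suc.prems deg[of "Suc n"]
        by (auto intro: coeff_eq_0)
      thus ?thesis unfolding g_def by simp
    qed
  qed
  then obtain d where d: "g = (\<Sum>k\<le>n. smult (d k) (B k))" using Suc.IH by blast
  define d' where "d' = d(Suc n := coeff f (Suc n) / lc)"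
  have "f = g + smult (coeff f (Suc n) / lc) (B (Suc n))" unfolding g_def by simp
  also have "\<dots> = (\<Sum>k\<le>n. smult (d' k) (B k)) + smult (d' (Suc n)) (B (Suc n))"
    unfolding d d'_def by (auto intro!: sum.cong)
  also have "\<dots> = (\<Sum>k\<le>Suc n. smult (d' k) (B k))" by simp
  finally show ?case by blast
qed

lemma basis_unique:
  fixes B :: "nat \<Rightarrow> 'a::field poly"
  assumes deg: "\<And>k. degree (B k) = k" and nz: "\<And>k. B k \<noteq> 0"
  shows "(\<Sum>k\<le>n. smult (e k) (B k)) = 0 \<Longrightarrow> \<forall>k\<le>n. e k = 0"
proof (induction n)
  case 0 thus ?case using nz[of 0] by simp
next
  case (Suc n)
  have "coeff (\<Sum>k\<le>Suc n. smult (e k) (B k)) (Suc n) = e (Suc n) * lead_coeff (B (Suc n))"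
  proof -
    have "coeff (\<Sum>k\<le>n. smult (e k) (B k)) (Suc n) = 0"
      unfolding coeff_sum
      by (rule sum.neutral) (auto intro!: coeff_eq_0 simp: deg)
    thus ?thesis by (simp add: deg)
  qed
  moreover have "coeff (\<Sum>k\<le>Suc n. smult (e k) (B k)) (Suc n) = 0" using Suc.prems by simp
  ultimately have "e (Suc n) * lead_coeff (B (Suc n)) = 0" by simp
  hence es: "e (Suc n) = 0" using nz[of "Suc n"] by simp
  hence "(\<Sum>k\<le>n. smult (e k) (B k)) = 0" using Suc.prems by simp
  hence "\<forall>k\<le>n. e k = 0" by (rule Suc.IH)
  thus ?case using es le_Suc_eq by auto
qed

definition PP :: "'a::field \<Rightarrow> nat \<Rightarrow> 'a poly" where
  "PP q k = (\<Prod>i<k. smult (inverse q ^ i) [:- qint q i, 1:])"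

lemma PP_deg: assumes "(q::'a::field) \<noteq> 0" shows "degree (PP q k) = k" "PP q k \<noteq> 0"
proof -
  have nz: "\<forall>i\<in>{..<k}. smult (inverse q ^ i) [:- qint q i, 1:] \<noteq> 0" using assms by simp
  show "degree (PP q k) = k" unfolding PP_def
    by (subst degree_prod_eq_sum_degree[OF nz]) (simp add: assms)
  show "PP q k \<noteq> 0" unfolding PP_def using nz by simp
qed

lemma qStirling2_prop:
  assumes "(q::'a::field) \<noteq> 0"
  shows "monom 1 n = (\<Sum>k\<le>n. smult (q ^ (k choose 2) * qStirling2 q n k) (PP q k))"
proof -
  let ?P = "\<lambda>c. (\<forall>k>n. c k = 0) \<and>
      monom 1 n = (\<Sum>k\<le>n. smult (q ^ (k choose 2) * c k)
                     (\<Prod>i<k. smult (inverse q ^ i) [:- qint q i, 1:]))"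
  have ex: "\<exists>c. ?P c"
  proof -
    obtain d where d: "monom 1 n = (\<Sum>k\<le>n. smult (d k) (PP q k))"
      using basis_exists[of "PP q" "monom 1 n" n] PP_deg[OF assms] degree_monom_le by blast
    define c where "c k = (if k \<le> n then d k / q ^ (k choose 2) else 0)" for k
    have "?P c" unfolding c_def using d assms by (auto simp: PP_def intro!: sum.cong)
    thus ?thesis by blast
  qed
  have un: "c1 = c2" if "?P c1" "?P c2" for c1 c2
  proof
    fix k
    have "(\<Sum>k\<le>n. smult (q ^ (k choose 2) * (c1 k - c2 k)) (PP q k)) =
      (\<Sum>k\<le>n. smult (q ^ (k choose 2) * c1 k) (PP q k)) - (\<Sum>k\<le>n. smult (q ^ (k choose 2) * c2 k) (PP q k))"
      by (simp only: right_diff_distrib smult_diff_left sum_subtractf)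
    also have "\<dots> = 0" using that unfolding PP_def by simp
    finally have "\<forall>k\<le>n. q ^ (k choose 2) * (c1 k - c2 k) = 0"
      using basis_unique[where B="PP q" and e="\<lambda>k. q ^ (k choose 2) * (c1 k - c2 k)",
          OF PP_deg(1)[OF assms] PP_deg(2)[OF assms]] by blast
    thus "c1 k = c2 k" using that assms by (cases "k \<le> n") auto
  qed
  have "?P (qStirling2 q n)" unfolding qStirling2_def
    by (rule theI'[of ?P]) (use ex un in blast)
  thus ?thesis unfolding PP_def by simp
qed


fun gb :: "'a::field \<Rightarrow> nat \<Rightarrow> nat \<Rightarrow> 'a" where
  "gb q 0 l = (if l = 0 then 1 else 0)"
| "gb q (Suc k) l = (if l = 0 then 1 else q ^ l * gb q k l + gb q k (l - 1))"

lemma gb0: "gb q k 0 = 1" by (cases k) auto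

lemma gb_big: "k < l \<Longrightarrow> gb q k l = 0"
  by (induction k arbitrary: l) auto

definition QQ :: "'a::field \<Rightarrow> nat \<Rightarrow> 'a poly" where
  "QQ q k = (\<Prod>i<k. [:1, - (inverse q ^ i):])"

lemma coeff_lin_mult0: "coeff ((p::'a::field poly) * [:1, c:]) 0 = coeff p 0"
  by (simp add: mult.commute)

lemma coeff_lin_multS: "coeff ((p::'a::field poly) * [:1, c:]) (Suc l) = coeff p (Suc l) + c * coeff p l"
  by (simp add: mult.commute)

lemma QQ_coeff:
  assumes "(q::'a::field) \<noteq> 0"
  shows "coeff (QQ q k) l * q ^ (l * k) = (-1) ^ l * gb q k l * q ^ ((l choose 2) + l)"
proof (induction k arbitrary: l)
  case 0 thus ?case by (simp add: QQ_def binomial_eq_0)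
next
  case (Suc k)
  have QS: "QQ q (Suc k) = QQ q k * [:1, - (inverse q ^ k):]" unfolding QQ_def by simp
  show ?case
  proof (cases l)
    case 0 thus ?thesis using Suc.IH[of 0] by (simp add: QS coeff_lin_mult0 gb0)
  next
    case (Suc j)
    define A where "A = coeff (QQ q k) (Suc j)"
    define B where "B = coeff (QQ q k) j"
    have IH1: "A * q ^ (Suc j * k) = (-1) ^ Suc j * gb q k (Suc j) * q ^ ((Suc j choose 2) + Suc j)"
      using Suc.IH[of "Suc j"] unfolding A_def .
    have IH2: "B * q ^ (j * k) = (-1) ^ j * gb q k j * q ^ ((j choose 2) + j)"
      using Suc.IH[of j] unfolding B_def .
    have c: "coeff (QQ q (Suc k)) (Suc j) = A - inverse q ^ k * B"
      unfolding QS coeff_lin_multS A_def B_def by simp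
    have e1: "q ^ (Suc j * Suc k) = q ^ (Suc j * k) * q ^ Suc j"
      by (simp add: power_add[symmetric] algebra_simps)
    have e2: "inverse q ^ k * q ^ (Suc j * Suc k) = q ^ (j * k) * q ^ Suc j"
    proof -
      have "q ^ (Suc j * Suc k) = q ^ k * (q ^ (j * k) * q ^ Suc j)"
        by (simp add: power_add[symmetric] algebra_simps)
      thus ?thesis using assms by (simp add: power_inverse field_simps)
    qed
    have e3: "(Suc j choose 2) = (j choose 2) + j" by (simp add: numeral_2_eq_2)
    have "coeff (QQ q (Suc k)) (Suc j) * q ^ (Suc j * Suc k)
        = A * q ^ (Suc j * k) * q ^ Suc j - B * (inverse q ^ k * q ^ (Suc j * Suc k))"
      unfolding c e1 by (simp add: algebra_simps)
    also have "\<dots> = A * q ^ (Suc j * k) * q ^ Suc j - B * q ^ (j * k) * q ^ Suc j"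
      unfolding e2 by (simp add: algebra_simps)
    also have "\<dots> = (-1) ^ Suc j * (q ^ Suc j * gb q k (Suc j) + gb q k j) * q ^ ((Suc j choose 2) + Suc j)"
      unfolding IH1 IH2 e3 by (simp add: algebra_simps power_add)
    finally show ?thesis using Suc by simp
  qed
qed


lemma qfact0: "qfact q 0 = 1" by (simp add: qfact_def)
lemma qfactS: "qfact q (Suc n) = qfact q n * qint q (Suc n)"
  unfolding qfact_def by (subst prod.nat_ivl_Suc') (auto simp: mult.commute)
lemma qfact_nz: "(\<And>i. 1 \<le> i \<Longrightarrow> i \<le> k \<Longrightarrow> qint q i \<noteq> 0) \<Longrightarrow> n \<le> k \<Longrightarrow> qfact q n \<noteq> 0"
  unfolding qfact_def by auto

lemma gb_qbinom:
  fixes q :: "'a::field"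
  assumes nz: "\<And>i. 1 \<le> i \<Longrightarrow> i \<le> K \<Longrightarrow> qint q i \<noteq> 0"
  shows "k \<le> K \<Longrightarrow> l \<le> k \<Longrightarrow> gb q k l = qbinom q k l"
proof (induction k arbitrary: l)
  case 0 thus ?case by (simp add: qbinom_def qfact0)
next
  case (Suc k)
  have F: "\<And>n. n \<le> Suc k \<Longrightarrow> qfact q n \<noteq> 0" using qfact_nz[OF nz] Suc.prems(1) by auto
  show ?case
  proof (cases "l = 0")
    case True thus ?thesis using F[of "Suc k"] by (simp add: qbinom_def qfact0)
  next
    case False
    then obtain j where j: "l = Suc j" by (cases l) auto
    show ?thesis
    proof (cases "j = k")
      case True
      have "gb q (Suc k) l = qbinom q k k" using Suc.IH[of k] Suc.prems j True gb_big[of k "Suc k" q] by simp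
      also have "\<dots> = 1" using F[of k] by (simp add: qbinom_def qfact0)
      also have "\<dots> = qbinom q (Suc k) l" using F[of "Suc k"] j True by (simp add: qbinom_def qfact0)
      finally show ?thesis .
    next
      case False
      hence jk: "j < k" using Suc.prems j by simp
      have g: "gb q (Suc k) l = q ^ Suc j * qbinom q k (Suc j) + qbinom q k j"
        using Suc.IH[of j] Suc.IH[of "Suc j"] Suc.prems jk j by simp
      define F0 where "F0 = qfact q k"
      define a where "a = qfact q j"
      define b where "b = qfact q (k - Suc j)"
      define i1 where "i1 = qint q (Suc j)"
      define i2 where "i2 = qint q (k - j)"
      define ik where "ik = qint q (Suc k)"
      have kj: "k - j = Suc (k - Suc j)" using jk by simp
      have h1: "qbinom q k (Suc j) = F0 / (a * i1 * b)"
        unfolding qbinom_def F0_def a_def b_def i1_def qfactS by simp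
      have h2: "qbinom q k j = F0 / (a * (b * i2))"
        unfolding qbinom_def F0_def a_def b_def i2_def kj qfactS by simp
      have h3: "qbinom q (Suc k) l = F0 * ik / (a * i1 * (b * i2))"
        unfolding qbinom_def F0_def a_def b_def i1_def i2_def ik_def j
        by (simp only: diff_Suc_Suc kj qfactS mult.assoc)
      have nzs: "a \<noteq> 0" "b \<noteq> 0" "i1 \<noteq> 0" "i2 \<noteq> 0"
        unfolding a_def b_def i1_def i2_def using F jk nz Suc.prems(1) by auto
      have key: "ik = q ^ Suc j * i2 + i1"
      proof -
        have e: "q ^ Suc j * q ^ (k - j) = q ^ Suc k" using jk by (simp only: power_add[symmetric]) simp
        have "(1 - q ^ Suc k) = q ^ Suc j * (1 - q ^ (k - j)) + (1 - q ^ Suc j)"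
          using e by (simp add: algebra_simps)
        thus ?thesis unfolding ik_def i1_def i2_def qint_def
          by (metis add_divide_distrib times_divide_eq_right)
      qed
      show ?thesis unfolding g h1 h2 h3 key using nzs by (simp add: field_simps)
    qed
  qed
qed

lemma QQ_deg: "degree (QQ (q::'a::field) k) \<le> k"
proof (induction k)
  case 0 thus ?case by (simp add: QQ_def)
next
  case (Suc k)
  have "QQ q (Suc k) = QQ q k * [:1, - (inverse q ^ k):]" unfolding QQ_def by simp
  hence "degree (QQ q (Suc k)) \<le> degree (QQ q k) + degree [:1, - (inverse q ^ k):]"
    using degree_mult_le by metis
  also have "degree [:1::'a, - (inverse q ^ k):] \<le> 1" by simp
  finally show ?case using Suc.IH by simp
qed

lemma poly_le: fixes p :: "'a::field poly" assumes "degree p \<le> N" shows "poly p x = (\<Sum>i\<le>N. coeff p i * x ^ i)"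
  unfolding poly_altdef by (rule sum.mono_neutral_left) (use assms in \<open>auto intro: coeff_eq_0\<close>)

definition TT :: "'a::field \<Rightarrow> 'a poly" where "TT q = [:1, q - 1:]"

lemma poly_TT: "poly (TT q) y = 1 + (q - 1) * y" by (simp add: TT_def mult.commute)

lemma PP_repr:
  fixes q :: "'a::field_char_0"
  assumes "q \<noteq> 0" "q \<noteq> 1"
  shows "PP q k = smult (inverse (1 - q) ^ k) (\<Sum>l\<le>k. smult (coeff (QQ q k) l) (TT q ^ l))"
proof -
  have "poly (PP q k) y = poly (smult (inverse (1 - q) ^ k) (\<Sum>l\<le>k. smult (coeff (QQ q k) l) (TT q ^ l))) y" for y
  proof -
    have fac: "inverse q ^ i * (y - qint q i) = inverse (1 - q) * (1 - inverse q ^ i * (1 + (q - 1) * y))" for i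
    proof -
      have "q ^ i \<noteq> 0" using assms by simp
      moreover have "1 - q \<noteq> 0" using assms by simp
      ultimately show ?thesis unfolding qint_def by (simp add: field_simps power_inverse)
    qed
    have "poly (PP q k) y = (\<Prod>i<k. inverse q ^ i * (y - qint q i))"
      unfolding PP_def poly_prod by (simp add: algebra_simps)
    also have "\<dots> = (\<Prod>i<k. inverse (1 - q) * (1 - inverse q ^ i * (1 + (q - 1) * y)))"
      using fac by simp
    also have "\<dots> = inverse (1 - q) ^ k * (\<Prod>i<k. (1 - inverse q ^ i * (1 + (q - 1) * y)))"
      by (simp add: prod.distrib)
    also have "(\<Prod>i<k. (1 - inverse q ^ i * (1 + (q - 1) * y))) = poly (QQ q k) (1 + (q - 1) * y)"
      unfolding QQ_def poly_prod by (intro prod.cong) (simp_all add: algebra_simps)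
    also have "poly (QQ q k) (1 + (q - 1) * y) = (\<Sum>l\<le>k. coeff (QQ q k) l * (1 + (q - 1) * y) ^ l)"
      using poly_le[OF QQ_deg] .
    finally show ?thesis by (simp add: poly_sum poly_TT)
  qed
  thus ?thesis using poly_eq_poly_eq_iff by blast
qed

lemma TT_pow:
  fixes q :: "'a::field_char_0"
  shows "TT q ^ l = (\<Sum>m\<le>l. smult (of_nat (l choose m) * (q - 1) ^ m) (monom 1 m))"
proof -
  have "poly (TT q ^ l) y = poly (\<Sum>m\<le>l. smult (of_nat (l choose m) * (q - 1) ^ m) (monom 1 m)) y" for y
  proof -
    have "poly (TT q ^ l) y = ((q - 1) * y + 1) ^ l" by (simp add: TT_def algebra_simps)
    also have "\<dots> = (\<Sum>m\<le>l. of_nat (l choose m) * ((q - 1) * y) ^ m * 1 ^ (l - m))"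
      by (rule binomial_ring)
    also have "\<dots> = poly (\<Sum>m\<le>l. smult (of_nat (l choose m) * (q - 1) ^ m) (monom 1 m)) y"
      by (simp add: poly_sum poly_monom power_mult_distrib mult.assoc)
    finally show ?thesis .
  qed
  thus ?thesis using poly_eq_poly_eq_iff by blast
qed


definition LL :: "nat \<Rightarrow> (nat \<Rightarrow> 'a::field) \<Rightarrow> 'a poly \<Rightarrow> 'a" where
  "LL n E f = (\<Sum>j\<le>n. coeff f j * E j)"

lemma LL_smult: "LL n E (smult c f) = c * LL n E f"
  unfolding LL_def by (simp add: sum_distrib_left mult.assoc)

lemma LL_sum: "LL n E (sum F A) = (\<Sum>a\<in>A. LL n E (F a))"
  unfolding LL_def coeff_sum by (simp add: sum_distrib_right sum.swap[of _ A])

lemma LL_monom: assumes "m \<le> n" shows "LL n E (monom 1 m) = E m"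
proof -
  have "LL n E (monom 1 m) = (\<Sum>j\<le>n. if m = j then E j else 0)"
    unfolding LL_def coeff_monom by (rule sum.cong) auto
  thus ?thesis using assms by simp
qed

lemma swap_tri: "(\<Sum>m\<le>(k::nat). \<Sum>l=m..k. f m l) = (\<Sum>l\<le>k. \<Sum>m\<le>l. (f m l :: 'a::comm_monoid_add))"
proof (induction k)
  case 0 thus ?case by simp
next
  case (Suc k)
  have "(\<Sum>m\<le>Suc k. \<Sum>l=m..Suc k. f m l) = (\<Sum>m\<le>Suc k. (\<Sum>l=m..k. f m l) + f m (Suc k))"
    by (intro sum.cong) auto
  also have "\<dots> = (\<Sum>m\<le>Suc k. \<Sum>l=m..k. f m l) + (\<Sum>m\<le>Suc k. f m (Suc k))"
    by (simp add: sum.distrib)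
  also have "(\<Sum>m\<le>Suc k. \<Sum>l=m..k. f m l) = (\<Sum>m\<le>k. \<Sum>l=m..k. f m l)" by simp
  finally show ?case using Suc.IH by simp
qed

lemma term_id:
  fixes q :: "'a::field"
  assumes "q \<noteq> 0" "q \<noteq> 1"
  shows "inverse (1 - q) ^ k * ((-1) ^ l * G * q ^ ((l choose 2) + l) / q ^ (l * k)) * (q - 1) ^ m
    = (q - 1) powi (int m - int k) * G * q powi (int (l choose 2) + int l * (1 - int k)) * (-1) ^ (l + k)"
proof -
  have ex: "int (l choose 2) + int l * (1 - int k) = int ((l choose 2) + l) - int (l * k)"
    by (simp add: algebra_simps)
  have q1: "q - 1 \<noteq> 0" using assms by simp
  have a: "q powi (int (l choose 2) + int l * (1 - int k)) = q ^ ((l choose 2) + l) / q ^ (l * k)"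
    unfolding ex by (simp only: power_int_diff[OF disjI1[OF assms(1)]] power_int_of_nat)
  have b: "(q - 1) powi (int m - int k) = (q - 1) ^ m / (q - 1) ^ k"
    by (simp only: power_int_diff[OF disjI1[OF q1]] power_int_of_nat)
  have c: "inverse (1 - q) ^ k = (-1) ^ k / (q - 1) ^ k"
  proof -
    have "1 - q = - (q - 1)" by simp
    hence "inverse (1 - q) = - inverse (q - 1)" using inverse_minus_eq[of "q - 1"] by simp
    hence "inverse (1 - q) ^ k = (-1) ^ k * inverse (q - 1) ^ k"
      using power_minus[of "inverse (q - 1)" k] by simp
    thus ?thesis by (simp add: power_inverse divide_inverse)
  qed
  show ?thesis unfolding a b c by (simp only: divide_inverse power_add mult_ac)
qed


theorem mainTheorem1:
  fixes p :: nat and N :: "'a::field_char_0 \<Rightarrow> real" and q :: 'a and n :: nat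
  assumes "prime p" and "odd p" and "Cp_like p N"
    and "N (1 - q) < real p powr (- 1 / (real p - 1))"
    and "q \<noteq> 1"
  shows "qEuler q n =
    (\<Sum>k\<le>n. \<Sum>m\<le>k. \<Sum>l=m..k.
       q ^ (k choose 2) * qStirling2 q n k * (q - 1) powi (int m - int k) *
       qbinom q k l * q powi (int (l choose 2) + int l * (1 - int k)) *
       of_nat (l choose m) * (-1) ^ (l + k) * qEuler q m)"
proof -
  have p2: "p \<ge> 2" using assms(1) prime_ge_2_nat by auto
  define r where "r = real p powr (- 1 / (real p - 1))"
  have r0: "0 < r" unfolding r_def using p2 by simp
  have rp: "r ^ (p - 1) = 1 / real p"
  proof -
    have "r ^ (p - 1) = r powr real (p - 1)" using powr_realpow[OF r0] by simp
    also have "\<dots> = real p powr (- 1 / (real p - 1) * real (p - 1))"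
      unfolding r_def by (rule powr_powr)
    also have "- 1 / (real p - 1) * real (p - 1) = -1" using p2 by (simp add: of_nat_diff)
    finally show ?thesis using p2 by (simp add: powr_neg_one)
  qed
  have r1: "r \<le> 1"
  proof -
    have "r ^ (p - 1) \<le> 1" using rp p2 by simp
    thus ?thesis using power_le_one_iff[of r "p - 1"] r0 p2 by simp
  qed
  have hN: "N (1 - q) < r" using assms(4) unfolding r_def .
  have q0: "q \<noteq> 0"
  proof
    assume "q = 0"
    hence "N (1 - q) = 1" using N1[OF assms(3)] by simp
    thus False using hN r1 by simp
  qed
  have qi: "qint q i \<noteq> 0" if "1 \<le> i" for i
  proof -
    have "q ^ i \<noteq> 1" using noroot[OF assms(3,1) hN rp r1 r0, of i] that assms(5) by auto
    thus ?thesis unfolding qint_def using assms(5) by simp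
  qed
  define E where "E = qEuler q"
  define s where "s = qStirling2 q n"
  define X where "X k m l = q ^ (k choose 2) * s k * (q - 1) powi (int m - int k) *
       qbinom q k l * q powi (int (l choose 2) + int l * (1 - int k)) *
       of_nat (l choose m) * (-1) ^ (l + k) * E m" for k m l
  have LT: "LL n E (TT q ^ l) = (\<Sum>m\<le>l. of_nat (l choose m) * (q - 1) ^ m * E m)" if "l \<le> n" for l
    unfolding TT_pow LL_sum LL_smult using that by (intro sum.cong) (auto simp: LL_monom)
  have LP: "LL n E (PP q k) = inverse (1 - q) ^ k *
      (\<Sum>l\<le>k. coeff (QQ q k) l * (\<Sum>m\<le>l. of_nat (l choose m) * (q - 1) ^ m * E m))" if "k \<le> n" for k
    unfolding PP_repr[OF q0 assms(5)] LL_sum LL_smult using that by (intro arg_cong2[where f="(*)"] refl sum.cong) (auto simp: LT)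
  have "qEuler q n = LL n E (monom 1 n)" unfolding E_def by (simp add: LL_monom)
  also have "\<dots> = LL n E (\<Sum>k\<le>n. smult (q ^ (k choose 2) * s k) (PP q k))"
    unfolding s_def using qStirling2_prop[OF q0] by metis
  also have "\<dots> = (\<Sum>k\<le>n. q ^ (k choose 2) * s k * LL n E (PP q k))"
    unfolding LL_sum LL_smult ..
  also have "\<dots> = (\<Sum>k\<le>n. \<Sum>m\<le>k. \<Sum>l=m..k. X k m l)"
  proof (intro sum.cong refl)
    fix k assume k: "k \<in> {..n}"
    hence kle: "k \<le> n" by simp
    have "(\<Sum>m\<le>k. \<Sum>l=m..k. X k m l) = (\<Sum>l\<le>k. \<Sum>m\<le>l. X k m l)" by (rule swap_tri)
    also have "\<dots> = q ^ (k choose 2) * s k * LL n E (PP q k)"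
      unfolding LP[OF kle] sum_distrib_left
    proof (intro sum.cong refl)
      fix l m assume l: "l \<in> {..k}" and m: "m \<in> {..l}"
      have G: "gb q k l = qbinom q k l" using gb_qbinom[of n q k l] qi k l by auto
      have cQ: "coeff (QQ q k) l = (-1) ^ l * qbinom q k l * q ^ ((l choose 2) + l) / q ^ (l * k)"
        using QQ_coeff[OF q0, of k l] G q0 by (simp add: eq_divide_eq)
      have T: "inverse (1 - q) ^ k * coeff (QQ q k) l * (q - 1) ^ m =
          (q - 1) powi (int m - int k) * qbinom q k l * q powi (int (l choose 2) + int l * (1 - int k)) * (-1) ^ (l + k)"
        unfolding cQ using term_id[OF q0 assms(5), of k l "qbinom q k l" m] by simp
      have "X k m l = q ^ (k choose 2) * s k * of_nat (l choose m) * E m *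
          ((q - 1) powi (int m - int k) * qbinom q k l * q powi (int (l choose 2) + int l * (1 - int k)) * (-1) ^ (l + k))"
        unfolding X_def by (simp only: mult_ac)
      also have "\<dots> = q ^ (k choose 2) * s k * of_nat (l choose m) * E m *
          (inverse (1 - q) ^ k * coeff (QQ q k) l * (q - 1) ^ m)" unfolding T ..
      also have "\<dots> = q ^ (k choose 2) * s k * (inverse (1 - q) ^ k * (coeff (QQ q k) l *
          (of_nat (l choose m) * (q - 1) ^ m * E m)))" by (simp only: mult_ac)
      finally show "X k m l = \<dots>" .
    qed
    finally show "q ^ (k choose 2) * s k * LL n E (PP q k) = (\<Sum>m\<le>k. \<Sum>l=m..k. X k m l)" ..
  qed
  finally show ?thesis unfolding X_def E_def s_def .
qed

end
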